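(* Let $\rho=(r_n)_n$ be an increasing sequence in $[0,1)$ with $r_n\to 1$. Let $\gamma_1,\gamma_2:[0,1)\to\mathbb{D}$ be two disjoint paths with $\gamma_1(r)\to\zeta_1$ and $\gamma_2(r)\to\zeta_2$ as $r\to1$, where $\zeta_1\neq\zeta_2$ are points of $\mathbb{T}$. Let $h$ be a positive harmonic function on $\mathbb{D}$. Then there is no $f\in\mathcal{U}_A(\mathbb{D},\rho)$ such that $|f|\le e^h$ on $\gamma_1\cup\gamma_2$.
   Context: $\mathbb{D}$ is the open unit disc, $\mathbb{T}$ the unit circle. For $f\in H(\mathbb{D})$, $f_r(z):=f(rz)$; $\mathcal{U}_A(\mathbb{D},\rho)$ is the set of $f\in H(\mathbb{D})$ such that for every compact $K\subset\mathbb{T}$, $K\neq\mathbb{T}$, and every continuous $\varphi$ on $K$ there is an increasing sequence $(n_k)$ with $\sup_{\zeta\in K}|f_{r_{n_k}}(\zeta)-\varphi(\zeta)|\to0$. *)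

theory Defs
  imports "HOL-Analysis.Analysis"
begin

text \<open>Harmonic functions on an open set S of the plane (identified with complex):
  h is C^2 (twice Frechet differentiable with continuous second derivative) and its
  Laplacian h_xx + h_yy vanishes.\<close>
definition harmonic_on :: "(complex \<Rightarrow> real) \<Rightarrow> complex set \<Rightarrow> bool" where
  "harmonic_on h S \<longleftrightarrow> open S \<and>
     (\<exists>(Dh :: complex \<Rightarrow> (complex \<Rightarrow>\<^sub>L real)) (D2h :: complex \<Rightarrow> (complex \<Rightarrow>\<^sub>L (complex \<Rightarrow>\<^sub>L real))).
        (\<forall>z\<in>S. (h has_derivative blinfun_apply (Dh z)) (at z)) \<and>
        (\<forall>z\<in>S. (Dh has_derivative blinfun_apply (D2h z)) (at z)) \<and>
        continuous_on S D2h \<and>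
        (\<forall>z\<in>S. blinfun_apply (blinfun_apply (D2h z) 1) 1
               + blinfun_apply (blinfun_apply (D2h z) \<i>) \<i> = 0))"

definition U_A :: "(nat \<Rightarrow> real) \<Rightarrow> (complex \<Rightarrow> complex) set" where
  "U_A r = {f. f holomorphic_on ball 0 1 \<and>
     (\<forall>K \<phi>. compact K \<and> K \<subseteq> sphere 0 1 \<and> K \<noteq> sphere 0 1 \<and> continuous_on K \<phi> \<longrightarrow>
        (\<exists>n::nat \<Rightarrow> nat. strict_mono n \<and>
           (\<forall>\<epsilon>>0. \<forall>\<^sub>F k in sequentially. \<forall>\<zeta>\<in>K.
               norm (f (complex_of_real (r (n k)) * \<zeta>) - \<phi> \<zeta>) < \<epsilon>)))}"

end

theory Submission
  imports Defs "HOL-Complex_Analysis.Complex_Analysis"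
begin

lemma mixed_mvt:
  fixes h :: "complex \<Rightarrow> real" and Dh :: "complex \<Rightarrow> (complex \<Rightarrow>\<^sub>L real)"
    and D2h :: "complex \<Rightarrow> (complex \<Rightarrow>\<^sub>L (complex \<Rightarrow>\<^sub>L real))"
  assumes d1: "\<And>w. w \<in> ball z R \<Longrightarrow> (h has_derivative blinfun_apply (Dh w)) (at w)"
    and d2: "\<And>w. w \<in> ball z R \<Longrightarrow> (Dh has_derivative blinfun_apply (D2h w)) (at w)"
    and t: "t > 0" "t * (norm a + norm b) < R"
  shows "\<exists>\<xi>. dist \<xi> z \<le> t * (norm a + norm b) \<and>
     h (z + t *\<^sub>R a + t *\<^sub>R b) - h (z + t *\<^sub>R a) - h (z + t *\<^sub>R b) + h z
       = t^2 * blinfun_apply (blinfun_apply (D2h \<xi>) b) a"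
proof -
  have inb: "z + u *\<^sub>R a + v *\<^sub>R b \<in> ball z R" if "0 \<le> u" "u \<le> t" "0 \<le> v" "v \<le> t" for u v
  proof -
    have "norm (u *\<^sub>R a + v *\<^sub>R b) \<le> u * norm a + v * norm b"
      using that norm_triangle_ineq[of "u *\<^sub>R a" "v *\<^sub>R b"] by simp
    also have "\<dots> \<le> t * norm a + t * norm b"
      using that by (intro add_mono mult_right_mono) auto
    moreover have "cmod (- (u *\<^sub>R a) - v *\<^sub>R b) = cmod (u *\<^sub>R a + v *\<^sub>R b)"
      by (metis minus_diff_eq norm_minus_cancel add_uminus_conv_diff minus_add_distrib)
    ultimately show ?thesis using t by (simp add: dist_norm algebra_simps)
  qed
  define \<phi> where "\<phi> u = h (z + u *\<^sub>R a + t *\<^sub>R b) - h (z + u *\<^sub>R a)" for u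
  have D\<phi>: "(\<phi> has_real_derivative
      (blinfun_apply (Dh (z + u *\<^sub>R a + t *\<^sub>R b)) a - blinfun_apply (Dh (z + u *\<^sub>R a)) a)) (at u)"
    if "0 \<le> u" "u \<le> t" for u
  proof -
    have l1: "((\<lambda>u. z + u *\<^sub>R a + t *\<^sub>R b) has_derivative (\<lambda>v. v *\<^sub>R a)) (at u)"
      by (auto intro!: derivative_eq_intros)
    have l2: "((\<lambda>u. z + u *\<^sub>R a) has_derivative (\<lambda>v. v *\<^sub>R a)) (at u)"
      by (auto intro!: derivative_eq_intros)
    have c1: "((\<lambda>u. h (z + u *\<^sub>R a + t *\<^sub>R b)) has_derivative (\<lambda>v. blinfun_apply (Dh (z + u *\<^sub>R a + t *\<^sub>R b)) (v *\<^sub>R a))) (at u)"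
      using has_derivative_compose[OF l1 d1[OF inb[OF that order_less_imp_le[OF t(1)] order_refl]]] by (simp add: o_def)
    have c2: "((\<lambda>u. h (z + u *\<^sub>R a)) has_derivative (\<lambda>v. blinfun_apply (Dh (z + u *\<^sub>R a)) (v *\<^sub>R a))) (at u)"
    proof -
      have "z + u *\<^sub>R a \<in> ball z R" using inb[of u 0] that t by simp
      then show ?thesis using has_derivative_compose[OF l2 d1] by (simp add: o_def)
    qed
    have "(\<phi> has_derivative (\<lambda>v. blinfun_apply (Dh (z + u *\<^sub>R a + t *\<^sub>R b)) (v *\<^sub>R a) - blinfun_apply (Dh (z + u *\<^sub>R a)) (v *\<^sub>R a))) (at u)"
      unfolding \<phi>_def by (rule has_derivative_diff[OF c1 c2])
    then show ?thesis unfolding has_field_derivative_def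
      by (rule has_derivative_eq_rhs) (auto simp: fun_eq_iff blinfun.scaleR_right algebra_simps)
  qed
  obtain u1 where u1: "0 < u1" "u1 < t" "\<phi> t - \<phi> 0 = (t - 0) *
      (blinfun_apply (Dh (z + u1 *\<^sub>R a + t *\<^sub>R b)) a - blinfun_apply (Dh (z + u1 *\<^sub>R a)) a)"
    using MVT2[OF t(1), of \<phi>, OF D\<phi>] by auto
  define \<psi> where "\<psi> v = blinfun_apply (Dh (z + u1 *\<^sub>R a + v *\<^sub>R b)) a" for v
  have D\<psi>: "(\<psi> has_real_derivative blinfun_apply (blinfun_apply (D2h (z + u1 *\<^sub>R a + v *\<^sub>R b)) b) a) (at v)"
    if "0 \<le> v" "v \<le> t" for v
  proof -
    have l1: "((\<lambda>v. z + u1 *\<^sub>R a + v *\<^sub>R b) has_derivative (\<lambda>x. x *\<^sub>R b)) (at v)"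
      by (auto intro!: derivative_eq_intros)
    have c1: "((\<lambda>v. Dh (z + u1 *\<^sub>R a + v *\<^sub>R b)) has_derivative (\<lambda>x. blinfun_apply (D2h (z + u1 *\<^sub>R a + v *\<^sub>R b)) (x *\<^sub>R b))) (at v)"
      using has_derivative_compose[OF l1 d2[OF inb[OF _ _ that]]] u1 by (simp add: o_def)
    have "(\<psi> has_derivative (\<lambda>x. blinfun_apply (blinfun_apply (D2h (z + u1 *\<^sub>R a + v *\<^sub>R b)) (x *\<^sub>R b)) a)) (at v)"
      unfolding \<psi>_def
      by (rule bounded_linear.has_derivative[OF blinfun.bounded_linear_left c1])
    then show ?thesis unfolding has_field_derivative_def
      by (rule has_derivative_eq_rhs) (auto simp: fun_eq_iff blinfun.scaleR_right blinfun.scaleR_left algebra_simps)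
  qed
  obtain v1 where v1: "0 < v1" "v1 < t" "\<psi> t - \<psi> 0 = (t - 0) *
      blinfun_apply (blinfun_apply (D2h (z + u1 *\<^sub>R a + v1 *\<^sub>R b)) b) a"
    using MVT2[OF t(1), of \<psi>, OF D\<psi>] by auto
  show ?thesis
  proof (intro exI conjI)
    have "norm (u1 *\<^sub>R a + v1 *\<^sub>R b) \<le> u1 * norm a + v1 * norm b"
      using u1 v1 norm_triangle_ineq[of "u1 *\<^sub>R a" "v1 *\<^sub>R b"] by simp
    also have "\<dots> \<le> t * norm a + t * norm b"
      using u1 v1 by (intro add_mono mult_right_mono) auto
    finally show "dist (z + u1 *\<^sub>R a + v1 *\<^sub>R b) z \<le> t * (norm a + norm b)"
      by (simp add: dist_norm algebra_simps)
    have "\<phi> t - \<phi> 0 = t * (\<psi> t - \<psi> 0)"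
      using u1(3) unfolding \<psi>_def by (simp add: algebra_simps)
    then show "h (z + t *\<^sub>R a + t *\<^sub>R b) - h (z + t *\<^sub>R a) - h (z + t *\<^sub>R b) + h z =
      t\<^sup>2 * blinfun_apply (blinfun_apply (D2h (z + u1 *\<^sub>R a + v1 *\<^sub>R b)) b) a"
      using v1(3) unfolding \<phi>_def by (simp add: power2_eq_square algebra_simps)
  qed
qed

lemma second_deriv_sym:
  fixes h :: "complex \<Rightarrow> real" and Dh :: "complex \<Rightarrow> (complex \<Rightarrow>\<^sub>L real)"
    and D2h :: "complex \<Rightarrow> (complex \<Rightarrow>\<^sub>L (complex \<Rightarrow>\<^sub>L real))"
  assumes S: "open S" and z: "z \<in> S"
    and d1: "\<And>w. w \<in> S \<Longrightarrow> (h has_derivative blinfun_apply (Dh w)) (at w)"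
    and d2: "\<And>w. w \<in> S \<Longrightarrow> (Dh has_derivative blinfun_apply (D2h w)) (at w)"
    and c: "continuous_on S D2h"
  shows "blinfun_apply (blinfun_apply (D2h z) a) b = blinfun_apply (blinfun_apply (D2h z) b) a"
proof (rule ccontr)
  assume ne: "blinfun_apply (blinfun_apply (D2h z) a) b \<noteq> blinfun_apply (blinfun_apply (D2h z) b) a"
  define \<delta> where "\<delta> = \<bar>blinfun_apply (blinfun_apply (D2h z) a) b - blinfun_apply (blinfun_apply (D2h z) b) a\<bar>"
  have \<delta>: "\<delta> > 0" using ne by (simp add: \<delta>_def)
  obtain R where R: "R > 0" "ball z R \<subseteq> S" using S z open_contains_ball by blast
  have cz: "isCont D2h z" using c S z continuous_on_eq_continuous_at by blast
  have ab: "isCont (\<lambda>w. blinfun_apply (blinfun_apply (D2h w) a) b) z"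
    "isCont (\<lambda>w. blinfun_apply (blinfun_apply (D2h w) b) a) z"
    using cz by (auto intro!: continuous_intros)
  obtain \<rho>1 where \<rho>1: "\<rho>1 > 0" "\<And>w. dist w z < \<rho>1 \<Longrightarrow>
      dist (blinfun_apply (blinfun_apply (D2h w) a) b) (blinfun_apply (blinfun_apply (D2h z) a) b) < \<delta>/2"
    using ab(1) \<delta> unfolding continuous_at_eps_delta by (metis half_gt_zero)
  obtain \<rho>2 where \<rho>2: "\<rho>2 > 0" "\<And>w. dist w z < \<rho>2 \<Longrightarrow>
      dist (blinfun_apply (blinfun_apply (D2h w) b) a) (blinfun_apply (blinfun_apply (D2h z) b) a) < \<delta>/2"
    using ab(2) \<delta> unfolding continuous_at_eps_delta by (metis half_gt_zero)
  define m where "m = min R (min \<rho>1 \<rho>2)"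
  have m: "m > 0" using R \<rho>1 \<rho>2 by (simp add: m_def)
  define t where "t = m / (2 * (norm a + norm b + 1))"
  have t: "t > 0" unfolding t_def using m by (intro divide_pos_pos mult_pos_pos) (auto intro!: add_nonneg_pos)
  have tm: "t * (norm a + norm b) < m"
  proof -
    have "t * (norm a + norm b) \<le> t * (norm a + norm b + 1) " using t by simp
    also have "\<dots> = m / 2"
    proof -
      have N: "norm a + norm b + 1 \<noteq> 0" using norm_ge_zero[of a] norm_ge_zero[of b] by linarith
      show ?thesis unfolding t_def using N by (simp add: field_simps)
    qed
    finally show ?thesis using m by simp
  qed
  have d1': "\<And>w. w \<in> ball z R \<Longrightarrow> (h has_derivative blinfun_apply (Dh w)) (at w)"
    and d2': "\<And>w. w \<in> ball z R \<Longrightarrow> (Dh has_derivative blinfun_apply (D2h w)) (at w)"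
    using R d1 d2 by auto
  have tR: "t * (norm a + norm b) < R" using tm by (simp add: m_def)
  have tR': "t * (norm b + norm a) < R" using tR by (simp add: add.commute)
  obtain \<xi>1 where \<xi>1: "dist \<xi>1 z \<le> t * (norm a + norm b)"
    "h (z + t *\<^sub>R a + t *\<^sub>R b) - h (z + t *\<^sub>R a) - h (z + t *\<^sub>R b) + h z
       = t^2 * blinfun_apply (blinfun_apply (D2h \<xi>1) b) a"
    using mixed_mvt[OF d1' d2' t tR] by blast
  obtain \<xi>2 where \<xi>2: "dist \<xi>2 z \<le> t * (norm b + norm a)"
    "h (z + t *\<^sub>R b + t *\<^sub>R a) - h (z + t *\<^sub>R b) - h (z + t *\<^sub>R a) + h z
       = t^2 * blinfun_apply (blinfun_apply (D2h \<xi>2) a) b"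
    using mixed_mvt[OF d1' d2' t tR'] by blast
  have eq: "blinfun_apply (blinfun_apply (D2h \<xi>1) b) a = blinfun_apply (blinfun_apply (D2h \<xi>2) a) b"
    using \<xi>1(2) \<xi>2(2) t by (simp add: algebra_simps)
  have "dist \<xi>1 z < \<rho>2" using \<xi>1(1) tm by (simp add: m_def)
  from \<rho>2(2)[OF this] have A: "\<bar>blinfun_apply (blinfun_apply (D2h \<xi>1) b) a - blinfun_apply (blinfun_apply (D2h z) b) a\<bar> < \<delta>/2"
    by (simp add: dist_real_def)
  have "dist \<xi>2 z < \<rho>1" using \<xi>2(1) tm by (simp add: m_def add.commute)
  from \<rho>1(2)[OF this] have B: "\<bar>blinfun_apply (blinfun_apply (D2h \<xi>2) a) b - blinfun_apply (blinfun_apply (D2h z) a) b\<bar> < \<delta>/2"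
    by (simp add: dist_real_def)
  have gen: "\<And>X Y P Q :: real. \<bar>P - Y\<bar> < \<bar>X - Y\<bar> / 2 \<Longrightarrow> \<bar>Q - X\<bar> < \<bar>X - Y\<bar> / 2 \<Longrightarrow> P = Q \<Longrightarrow> False"
    by (simp add: abs_if split: if_splits)
  show False using gen[OF A[unfolded \<delta>_def] B[unfolded \<delta>_def] eq] .
qed


lemma harmonic_conj:
  assumes "harmonic_on h (ball 0 1)"
  shows "\<exists>g. g holomorphic_on ball 0 1 \<and> (\<forall>z\<in>ball 0 1. Re (g z) = h z)"
proof -
  obtain Dh :: "complex \<Rightarrow> (complex \<Rightarrow>\<^sub>L real)" and D2h :: "complex \<Rightarrow> (complex \<Rightarrow>\<^sub>L (complex \<Rightarrow>\<^sub>L real))"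
    where d1: "\<And>z. z \<in> ball 0 1 \<Longrightarrow> (h has_derivative blinfun_apply (Dh z)) (at z)"
      and d2: "\<And>z. z \<in> ball 0 1 \<Longrightarrow> (Dh has_derivative blinfun_apply (D2h z)) (at z)"
      and c: "continuous_on (ball 0 1) D2h"
      and lap: "\<And>z. z \<in> ball 0 1 \<Longrightarrow> blinfun_apply (blinfun_apply (D2h z) 1) 1
               + blinfun_apply (blinfun_apply (D2h z) \<i>) \<i> = 0"
    using assms unfolding harmonic_on_def by blast
  define L :: "(complex \<Rightarrow>\<^sub>L real) \<Rightarrow> complex" where
    "L M = complex_of_real (blinfun_apply M 1) - \<i> * complex_of_real (blinfun_apply M \<i>)" for M
  have bL: "bounded_linear L"
  proof -
    have b1: "bounded_linear (\<lambda>M. complex_of_real (blinfun_apply M 1))"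
      by (rule bounded_linear_compose[OF bounded_linear_of_real blinfun.bounded_linear_left])
    have b2: "bounded_linear (\<lambda>M. complex_of_real (blinfun_apply M \<i>))"
      by (rule bounded_linear_compose[OF bounded_linear_of_real blinfun.bounded_linear_left])
    have b3: "bounded_linear (\<lambda>M. \<i> * complex_of_real (blinfun_apply M \<i>))"
      by (rule bounded_linear_compose[OF bounded_linear_mult_right b2])
    show ?thesis unfolding L_def by (rule bounded_linear_sub[OF b1 b3])
  qed
  define p where "p z = L (Dh z)" for z
  have vdec: "v = Re v *\<^sub>R 1 + Im v *\<^sub>R \<i>" for v :: complex
    by (simp add: complex_eq_iff)
  have lin: "blinfun_apply M v = Re v * blinfun_apply M 1 + Im v * blinfun_apply M \<i>"
    for M :: "complex \<Rightarrow>\<^sub>L real" and v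
  proof -
    have "blinfun_apply M v = blinfun_apply M (Re v *\<^sub>R 1 + Im v *\<^sub>R \<i>)" using vdec[of v] by simp
    also have "\<dots> = Re v * blinfun_apply M 1 + Im v * blinfun_apply M \<i>"
      by (simp add: blinfun.add_right blinfun.scaleR_right)
    finally show ?thesis .
  qed
  have lin2: "blinfun_apply (D2h z) v = Re v *\<^sub>R blinfun_apply (D2h z) 1 + Im v *\<^sub>R blinfun_apply (D2h z) \<i>" for z v
  proof -
    have "blinfun_apply (D2h z) v = blinfun_apply (D2h z) (Re v *\<^sub>R 1 + Im v *\<^sub>R \<i>)" using vdec[of v] by simp
    also have "\<dots> = Re v *\<^sub>R blinfun_apply (D2h z) 1 + Im v *\<^sub>R blinfun_apply (D2h z) \<i>"
      by (simp add: blinfun.add_right blinfun.scaleR_right)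
    finally show ?thesis .
  qed
  have pder: "(p has_field_derivative L (blinfun_apply (D2h z) 1)) (at z)" if z: "z \<in> ball 0 1" for z
  proof -
    have sym: "blinfun_apply (blinfun_apply (D2h z) \<i>) 1 = blinfun_apply (blinfun_apply (D2h z) 1) \<i>"
      by (rule second_deriv_sym[OF open_ball z d1 d2 c])
    have "(p has_derivative (\<lambda>v. L (blinfun_apply (D2h z) v))) (at z)"
      unfolding p_def by (rule bounded_linear.has_derivative[OF bL d2[OF z]])
    moreover have "(\<lambda>v. L (blinfun_apply (D2h z) v)) = (\<lambda>v. L (blinfun_apply (D2h z) 1) * v)"
    proof
      fix v
      have "L (blinfun_apply (D2h z) v) = of_real (Re v) * L (blinfun_apply (D2h z) 1) + of_real (Im v) * L (blinfun_apply (D2h z) \<i>)"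
        by (subst lin2[of z v]) (simp add: L_def blinfun.add_left blinfun.scaleR_left algebra_simps)
      also have "L (blinfun_apply (D2h z) \<i>) = \<i> * L (blinfun_apply (D2h z) 1)"
        using lap[OF z] sym unfolding L_def
        by (simp add: algebra_simps complex_eq_iff)
      also have "of_real (Re v) * L (blinfun_apply (D2h z) 1) + of_real (Im v) * (\<i> * L (blinfun_apply (D2h z) 1)) = L (blinfun_apply (D2h z) 1) * v"
        by (subst (3) vdec) (simp add: algebra_simps scaleR_conv_of_real)
      finally show "L (blinfun_apply (D2h z) v) = L (blinfun_apply (D2h z) 1) * v" .
    qed
    ultimately show ?thesis by (simp add: has_field_derivative_def)
  qed
  have holp: "p holomorphic_on ball 0 1"
    using pder by (meson field_differentiable_at_within field_differentiable_def holomorphic_on_def)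
  obtain g0 where g0: "\<And>x. x \<in> ball 0 1 \<Longrightarrow> (g0 has_field_derivative p x) (at x within ball 0 1)"
    using holomorphic_convex_primitive'[OF convex_ball open_ball holp] by blast
  have g0': "(g0 has_field_derivative p x) (at x)" if "x \<in> ball 0 1" for x
    using g0[OF that] at_within_open[OF that open_ball] by simp
  have zero: "((\<lambda>z. Re (g0 z) - h z) has_derivative (\<lambda>v. 0)) (at x within ball 0 1)" if x: "x \<in> ball 0 1" for x
  proof -
    have A: "((\<lambda>z. Re (g0 z)) has_derivative (\<lambda>v. Re (p x * v))) (at x)"
      using bounded_linear.has_derivative[OF bounded_linear_Re has_field_derivative_imp_has_derivative[OF g0'[OF x]]]
      by simp
    have "((\<lambda>z. Re (g0 z) - h z) has_derivative (\<lambda>v. Re (p x * v) - blinfun_apply (Dh x) v)) (at x)"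
      by (rule has_derivative_diff[OF A d1[OF x]])
    moreover have "(\<lambda>v. Re (p x * v) - blinfun_apply (Dh x) v) = (\<lambda>v. 0)"
    proof
      fix v
      show "Re (p x * v) - blinfun_apply (Dh x) v = 0"
        unfolding lin[of "Dh x" v] p_def L_def by (simp add: algebra_simps)
    qed
    ultimately show ?thesis by (simp add: has_derivative_at_withinI)
  qed
  obtain c where cc: "\<forall>x\<in>ball 0 1. Re (g0 x) - h x = c"
    using has_derivative_zero_constant[OF convex_ball zero] by blast
  show ?thesis
  proof (intro exI conjI ballI)
    show "(\<lambda>z. g0 z - complex_of_real c) holomorphic_on ball 0 1"
      using g0' by (intro holomorphic_intros) (meson field_differentiable_at_within field_differentiable_def holomorphic_on_def)
    show "Re (g0 z - complex_of_real c) = h z" if "z \<in> ball 0 1" for z using cc that by force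
  qed
qed


lemma ext_path:
  fixes \<gamma> :: "real \<Rightarrow> complex"
  assumes c: "continuous_on {0..<1} \<gamma>" and l: "(\<gamma> \<longlongrightarrow> \<zeta>) (at_left 1)"
  defines "P \<equiv> (\<lambda>t. if t < 1 then \<gamma> t else \<zeta>)"
  shows "path P" "path_image P = \<gamma> ` {0..<1} \<union> {\<zeta>}" "pathstart P = \<gamma> 0" "pathfinish P = \<zeta>"
proof -
  show "path P" unfolding path_def continuous_on_eq_continuous_within
  proof
    fix x :: real assume x: "x \<in> {0..1}"
    show "continuous (at x within {0..1}) P"
    proof (cases "x < 1")
      case True
      have "(\<gamma> \<longlongrightarrow> \<gamma> x) (at x within {0..<1})"
        using c x True by (simp add: continuous_on_def)
      then have "(P \<longlongrightarrow> \<gamma> x) (at x within {0..<1})"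
        by (rule Lim_transform_within_open[where s="{..<1}"]) (use True in \<open>auto simp: P_def\<close>)
      moreover have "at x within {0..1} = at x within {0..<1}"
        by (rule at_within_nhd[where S="{..<1}"]) (use True in auto)
      ultimately show ?thesis using True by (simp add: continuous_within P_def)
    next
      case False
      then have x1: "x = 1" using x by auto
      have ev: "eventually (\<lambda>y. \<gamma> y = P y) (at_left (1::real))"
        unfolding P_def by (simp add: eventually_at_filter)
      have "(P \<longlongrightarrow> \<zeta>) (at_left 1)" using tendsto_cong[OF ev] l by simp
      moreover have "at (1::real) within {0..1} = at 1 within {..<1}"
        by (rule at_within_nhd[where S="{0<..}"]) auto
      ultimately show ?thesis using x1 by (simp add: continuous_within P_def)
    qed
  qed
  show "path_image P = \<gamma> ` {0..<1} \<union> {\<zeta>}"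
  proof
    show "path_image P \<subseteq> \<gamma> ` {0..<1} \<union> {\<zeta>}" unfolding path_image_def P_def by auto
    have "\<gamma> x \<in> path_image P" if "x \<in> {0..<1}" for x
      unfolding path_image_def by (rule image_eqI[of _ _ x]) (use that in \<open>auto simp: P_def\<close>)
    moreover have "\<zeta> \<in> path_image P"
      unfolding path_image_def by (rule image_eqI[of _ _ 1]) (auto simp: P_def)
    ultimately show "\<gamma> ` {0..<1} \<union> {\<zeta>} \<subseteq> path_image P" by auto
  qed
  show "pathstart P = \<gamma> 0" "pathfinish P = \<zeta>" by (auto simp: P_def pathstart_def pathfinish_def)
qed

lemma exp_i_eq_imp:
  assumes "exp (\<i> * complex_of_real x) = exp (\<i> * complex_of_real y)" "\<bar>x - y\<bar> < 2 * pi"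
  shows "x = y"
proof -
  obtain n :: int where n: "\<i> * complex_of_real x = \<i> * complex_of_real y + complex_of_real (real_of_int (2 * n) * pi) * \<i>"
    using assms(1) exp_eq by blast
  then have "x = y + 2 * n * pi" by (simp add: complex_eq_iff)
  then have "\<bar>2 * n * pi\<bar> < 2 * pi" using assms(2) by simp
  then have "\<bar>n\<bar> < 1" by (simp add: abs_mult)
  then have "n = 0" by simp
  then show ?thesis using \<open>x = y + 2 * n * pi\<close> by simp
qed

lemma circle_arc:
  fixes \<zeta>1 \<zeta>2 :: complex
  assumes "\<zeta>1 \<in> sphere 0 1" "\<zeta>2 \<in> sphere 0 1" "\<zeta>1 \<noteq> \<zeta>2"
  shows "\<exists>\<alpha> \<zeta>0. arc \<alpha> \<and> path_image \<alpha> \<subseteq> sphere 0 1 \<and> pathstart \<alpha> = \<zeta>1 \<and> pathfinish \<alpha> = \<zeta>2 \<and>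
     \<zeta>0 \<in> path_image \<alpha> \<and> \<zeta>0 \<noteq> \<zeta>1 \<and> \<zeta>0 \<noteq> \<zeta>2 \<and> - \<zeta>0 \<notin> path_image \<alpha>"
proof -
  define a where "a = Arg2pi \<zeta>1"
  define b0 where "b0 = Arg2pi \<zeta>2"
  have e1: "exp (\<i> * complex_of_real a) = \<zeta>1" using assms(1) complex_norm_eq_1_exp a_def by auto
  have e2: "exp (\<i> * complex_of_real b0) = \<zeta>2" using assms(2) complex_norm_eq_1_exp b0_def by auto
  have ab0: "a \<noteq> b0" using e1 e2 assms(3) by auto
  define b where "b = (if a < b0 then b0 else b0 + 2 * pi)"
  have e2': "exp (\<i> * complex_of_real b) = \<zeta>2"
  proof (cases "a < b0")
    case False
    have "\<i> * complex_of_real (b0 + 2 * pi) = \<i> * complex_of_real b0 + 2 * of_real pi * \<i>"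
      by (simp add: algebra_simps)
    then have "exp (\<i> * complex_of_real (b0 + 2 * pi)) = exp (\<i> * complex_of_real b0) * exp (2 * of_real pi * \<i>)"
      by (simp only: exp_add)
    then show ?thesis using False e2 by (simp add: b_def)
  qed (use e2 b_def in auto)
  have ab: "a < b" "b < a + 2 * pi"
    using ab0 Arg2pi_ge_0[of \<zeta>1] Arg2pi_lt_2pi[of \<zeta>1] Arg2pi_ge_0[of \<zeta>2] Arg2pi_lt_2pi[of \<zeta>2]
    unfolding b_def a_def b0_def by auto
  define \<alpha> where "\<alpha> t = exp (\<i> * complex_of_real (a + t * (b - a)))" for t
  define \<zeta>0 where "\<zeta>0 = \<alpha> (1/2)"
  have norm\<alpha>: "norm (\<alpha> t) = 1" for t unfolding \<alpha>_def by simp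
  have path: "path \<alpha>" unfolding path_def \<alpha>_def by (intro continuous_intros)
  have inj: "inj_on \<alpha> {0..1}"
  proof (rule inj_onI)
    fix s t :: real assume st: "s \<in> {0..1}" "t \<in> {0..1}" "\<alpha> s = \<alpha> t"
    have "\<bar>(a + s * (b - a)) - (a + t * (b - a))\<bar> = \<bar>s - t\<bar> * (b - a)"
    proof -
      have "(a + s * (b - a)) - (a + t * (b - a)) = (s - t) * (b - a)" by (simp add: algebra_simps)
      then show ?thesis using ab by (simp add: abs_mult)
    qed
    also have "\<dots> \<le> 1 * (b - a)" using st ab by (intro mult_right_mono) auto
    also have "\<dots> < 2 * pi" using ab by simp
    finally have "a + s * (b - a) = a + t * (b - a)"
      using exp_i_eq_imp st(3) unfolding \<alpha>_def by blast
    then show "s = t" using ab by simp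
  qed
  have neg: "- \<zeta>0 \<noteq> \<alpha> t" if "t \<in> {0..1}" for t
  proof
    assume eq: "- \<zeta>0 = \<alpha> t"
    have "- \<zeta>0 = exp (\<i> * complex_of_real ((a + b) / 2 + pi))"
    proof -
      have h1: "a + 1 / 2 * (b - a) = (a + b) / 2" by (simp add: field_simps)
      have "\<i> * complex_of_real ((a + b) / 2 + pi) = \<i> * complex_of_real ((a + b) / 2) + of_real pi * \<i>"
        by (simp add: algebra_simps)
      then have "exp (\<i> * complex_of_real ((a + b) / 2 + pi)) = exp (\<i> * complex_of_real ((a + b) / 2)) * exp (of_real pi * \<i>)"
        by (simp only: exp_add)
      then show ?thesis unfolding \<zeta>0_def \<alpha>_def h1 by (simp add: exp_pi_i)
    qed
    then have E: "exp (\<i> * complex_of_real ((a + b) / 2 + pi)) = exp (\<i> * complex_of_real (a + t * (b - a)))"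
      using eq unfolding \<alpha>_def by simp
    define w where "w = (b - a) * (t - 1/2)"
    have weq: "((a + b) / 2 + pi) - (a + t * (b - a)) = pi - w"
      unfolding w_def by (simp add: algebra_simps field_simps)
    have w1: "w \<le> (b - a) * (1/2)" unfolding w_def using ab that by (intro mult_left_mono) auto
    have w2: "(b - a) * (-1/2) \<le> w" unfolding w_def using ab that by (intro mult_left_mono) auto
    have "\<bar>((a + b) / 2 + pi) - (a + t * (b - a))\<bar> < 2 * pi"
    proof -
      have "2 * w \<le> b - a" "- (b - a) \<le> 2 * w" using w1 w2 by (simp_all add: field_simps)
      then have "0 < pi - w" "pi - w < 2 * pi" using ab by linarith+
      then show ?thesis unfolding weq by simp
    qed
    then have "(a + b) / 2 + pi = a + t * (b - a)" using exp_i_eq_imp[OF E] by blast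
    moreover have "2 * w \<le> b - a" using w1 by (simp add: field_simps)
    ultimately show False using weq ab by linarith
  qed
  show ?thesis
  proof (intro exI conjI)
    show "arc \<alpha>" using path inj by (simp add: arc_def)
    show "path_image \<alpha> \<subseteq> sphere 0 1" using norm\<alpha> by (auto simp: path_image_def)
    show "pathstart \<alpha> = \<zeta>1" using e1 by (simp add: pathstart_def \<alpha>_def)
    show "pathfinish \<alpha> = \<zeta>2" using e2' by (simp add: pathfinish_def \<alpha>_def)
    show "\<zeta>0 \<in> path_image \<alpha>" unfolding \<zeta>0_def path_image_def by auto
    show "\<zeta>0 \<noteq> \<zeta>1"
    proof
      assume "\<zeta>0 = \<zeta>1"
      then have "\<alpha> (1/2) = \<alpha> 0" using e1 by (simp add: \<zeta>0_def \<alpha>_def)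
      then show False using inj by (auto dest: inj_onD)
    qed
    show "\<zeta>0 \<noteq> \<zeta>2"
    proof
      assume "\<zeta>0 = \<zeta>2"
      then have "\<alpha> (1/2) = \<alpha> 1" using e2' by (simp add: \<zeta>0_def \<alpha>_def)
      then show False using inj by (auto dest: inj_onD)
    qed
    show "- \<zeta>0 \<notin> path_image \<alpha>" unfolding path_image_def using neg by blast
  qed
qed

lemma region:
  fixes \<gamma>1 \<gamma>2 :: "real \<Rightarrow> complex"
  assumes \<gamma>1_cont: "continuous_on {0..<1} \<gamma>1"
    and \<gamma>2_cont: "continuous_on {0..<1} \<gamma>2"
    and \<gamma>1_in: "\<gamma>1 ` {0..<1} \<subseteq> ball 0 1"
    and \<gamma>2_in: "\<gamma>2 ` {0..<1} \<subseteq> ball 0 1"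
    and \<zeta>1: "\<zeta>1 \<in> sphere 0 1" and \<zeta>2: "\<zeta>2 \<in> sphere 0 1" and \<zeta>_ne: "\<zeta>1 \<noteq> \<zeta>2"
    and \<gamma>1_lim: "(\<gamma>1 \<longlongrightarrow> \<zeta>1) (at_left 1)"
    and \<gamma>2_lim: "(\<gamma>2 \<longlongrightarrow> \<zeta>2) (at_left 1)"
  shows "\<exists>\<Omega> \<eta> d \<zeta>0 d0. open \<Omega> \<and> \<Omega> \<subseteq> ball 0 1 \<and>
     frontier \<Omega> \<inter> ball 0 1 \<subseteq> \<gamma>1 ` {0..<1} \<union> \<gamma>2 ` {0..<1} \<union> closed_segment (\<gamma>1 0) (\<gamma>2 0) \<and>
     \<eta> \<in> sphere 0 1 \<and> d > 0 \<and> ball \<eta> d \<inter> closure \<Omega> = {} \<and>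
     \<zeta>0 \<in> sphere 0 1 \<and> d0 > 0 \<and> d0 \<le> 1 \<and> ball \<zeta>0 d0 \<inter> ball 0 1 \<subseteq> \<Omega>"
proof -
  define E where "E = \<gamma>1 ` {0..<1} \<union> \<gamma>2 ` {0..<1} \<union> closed_segment (\<gamma>1 0) (\<gamma>2 0)"
  have g10: "\<gamma>1 0 \<in> ball 0 1" and g20: "\<gamma>2 0 \<in> ball 0 1"
    using \<gamma>1_in \<gamma>2_in image_subset_iff[of _ "{0..<1}"] by (force, force)
  have Eb: "E \<subseteq> ball 0 1"
    unfolding E_def using \<gamma>1_in \<gamma>2_in closed_segment_subset[OF g10 g20 convex_ball] by auto
  define P1 where "P1 = (\<lambda>t. if t < 1 then \<gamma>1 t else \<zeta>1)"
  define P2 where "P2 = (\<lambda>t. if t < 1 then \<gamma>2 t else \<zeta>2)"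
  note p1 = ext_path[OF \<gamma>1_cont \<gamma>1_lim, folded P1_def]
  note p2 = ext_path[OF \<gamma>2_cont \<gamma>2_lim, folded P2_def]
  define Q where "Q = reversepath P1 +++ (linepath (\<gamma>1 0) (\<gamma>2 0) +++ P2)"
  have pQ: "path Q" unfolding Q_def using p1 p2 by (auto intro!: path_join_imp)
  have sQ: "pathstart Q = \<zeta>1" "pathfinish Q = \<zeta>2" unfolding Q_def using p1 p2 by auto
  have iQ: "path_image Q \<subseteq> E \<union> {\<zeta>1, \<zeta>2}"
  proof -
    have "path_image Q = path_image P1 \<union> (closed_segment (\<gamma>1 0) (\<gamma>2 0) \<union> path_image P2)"
      unfolding Q_def using p1 p2 by (simp add: path_image_join path_image_reversepath)
    then show ?thesis unfolding E_def using p1 p2 by auto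
  qed
  obtain \<beta> where \<beta>: "arc \<beta>" "path_image \<beta> \<subseteq> path_image Q" "pathstart \<beta> = \<zeta>1" "pathfinish \<beta> = \<zeta>2"
    using path_contains_arc[OF pQ sQ \<zeta>_ne] by blast
  have \<beta>E: "path_image \<beta> \<subseteq> E \<union> {\<zeta>1, \<zeta>2}" using \<beta>(2) iQ by blast
  obtain \<alpha> \<zeta>0 where \<alpha>: "arc \<alpha>" "path_image \<alpha> \<subseteq> sphere 0 1" "pathstart \<alpha> = \<zeta>1" "pathfinish \<alpha> = \<zeta>2"
     "\<zeta>0 \<in> path_image \<alpha>" "\<zeta>0 \<noteq> \<zeta>1" "\<zeta>0 \<noteq> \<zeta>2" "- \<zeta>0 \<notin> path_image \<alpha>"
    using circle_arc[OF \<zeta>1 \<zeta>2 \<zeta>_ne] by blast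
  define c where "c = \<alpha> +++ reversepath \<beta>"
  have sp: "simple_path c" unfolding c_def
  proof (rule simple_path_join_loop)
    show "arc \<alpha>" "arc (reversepath \<beta>)" using \<alpha> \<beta> by (auto simp: arc_reversepath)
    show "pathfinish \<alpha> = pathstart (reversepath \<beta>)" "pathfinish (reversepath \<beta>) = pathstart \<alpha>"
      using \<alpha> \<beta> by auto
    show "path_image \<alpha> \<inter> path_image (reversepath \<beta>) \<subseteq> {pathstart \<alpha>, pathstart (reversepath \<beta>)}"
    proof
      fix x assume x: "x \<in> path_image \<alpha> \<inter> path_image (reversepath \<beta>)"
      then have "x \<in> sphere 0 1" "x \<in> E \<union> {\<zeta>1, \<zeta>2}" using \<alpha>(2) \<beta>E by (auto simp: path_image_reversepath)
      then have "x = \<zeta>1 \<or> x = \<zeta>2" using Eb by auto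
      then show "x \<in> {pathstart \<alpha>, pathstart (reversepath \<beta>)}" using \<alpha>(3) \<beta>(4) by auto
    qed
  qed
  have loop: "pathfinish c = pathstart c" unfolding c_def using \<alpha> \<beta> by auto
  define S where "S = path_image c"
  have S: "S = path_image \<alpha> \<union> path_image \<beta>"
    unfolding S_def c_def using \<alpha> \<beta> by (simp add: path_image_join path_image_reversepath)
  have sph: "sphere 0 1 \<inter> ball 0 (1::real) = ({} :: complex set)" by auto
  have \<zeta>s: "\<zeta>1 \<in> path_image \<alpha>" "\<zeta>2 \<in> path_image \<alpha>" using \<alpha> by (auto simp del: pathstart_in_path_image intro: pathstart_in_path_image[of \<alpha>, simplified] pathfinish_in_path_image[of \<alpha>, simplified])
  have Scb: "S \<subseteq> cball 0 1"
  proof -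
    have "E \<union> {\<zeta>1, \<zeta>2} \<subseteq> cball 0 1" using Eb \<zeta>1 \<zeta>2 by auto
    then have "path_image \<beta> \<subseteq> cball 0 1" using \<beta>E by blast
    moreover have "path_image \<alpha> \<subseteq> cball 0 1" using \<alpha>(2) sphere_cball by blast
    ultimately show ?thesis using S by blast
  qed
  note J = Jordan_inside_outside[OF sp loop, folded S_def]
  define \<Omega> where "\<Omega> = inside S"
  have o\<Omega>: "open \<Omega>" using J by (simp add: \<Omega>_def)
  have fr: "frontier \<Omega> = S" using J by (simp add: \<Omega>_def)
  have \<Omega>cb: "\<Omega> \<subseteq> cball 0 1"
  proof -
    have "inside S \<subseteq> cball 0 1 - S"
    proof (rule inside_subset)
      show "connected (- cball (0::complex) 1)"
        by (rule connected_complement_bounded_convex) auto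
      show "\<not> bounded (- cball (0::complex) 1)"
      proof
        assume "bounded (- cball (0::complex) 1)"
        then have "bounded (cball 0 1 \<union> - cball (0::complex) 1)" using bounded_Un bounded_cball by blast
        moreover have "cball 0 1 \<union> - cball (0::complex) 1 = UNIV" by auto
        ultimately show False using not_bounded_UNIV by metis
      qed
      show "cball 0 1 - S \<union> - cball 0 1 = - S" using Scb by auto
    qed
    then show ?thesis unfolding \<Omega>_def by auto
  qed
  have \<Omega>b: "\<Omega> \<subseteq> ball 0 1"
    using interior_maximal[OF \<Omega>cb o\<Omega>] by simp
  have closedS: "closed S" unfolding S_def using sp
    by (simp add: closed_path_image simple_path_imp_path)
  have closed\<beta>: "closed (path_image \<beta>)" using \<beta>(1) by (simp add: closed_path_image arc_imp_path)
  define \<eta> where "\<eta> = - \<zeta>0"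
  have \<zeta>0s: "\<zeta>0 \<in> sphere 0 1" using \<alpha> by auto
  have \<eta>s: "\<eta> \<in> sphere 0 1" using \<zeta>0s by (simp add: \<eta>_def)
  have \<eta>S: "\<eta> \<notin> S"
  proof
    assume "\<eta> \<in> S"
    then have "\<eta> \<in> path_image \<beta>" using S \<alpha>(8) \<eta>_def by auto
    then have "\<eta> \<in> E \<union> {\<zeta>1, \<zeta>2}" using \<beta>E by auto
    then show False using \<eta>s Eb \<zeta>s \<alpha>(8) \<eta>_def by auto
  qed
  obtain d where d: "d > 0" "ball \<eta> d \<subseteq> - S"
    using open_contains_ball[of "- S"] closedS \<eta>S by (auto simp: open_Compl)
  have dis: "ball \<eta> d \<inter> \<Omega> = {}"
  proof (rule ccontr)
    assume "ball \<eta> d \<inter> \<Omega> \<noteq> {}"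
    then obtain y where y: "y \<in> ball \<eta> d" "y \<in> \<Omega>" by auto
    define p where "p = \<eta> + of_real (d/2) * \<eta>"
    have np: "norm p = 1 + d/2"
    proof -
      have "p = of_real (1 + d/2) * \<eta>" by (simp add: p_def algebra_simps)
      moreover have "norm (complex_of_real (1 + d/2)) = 1 + d/2" using d by (simp only: norm_of_real)
      ultimately show ?thesis using \<eta>s by (simp only: norm_mult) simp
    qed
    have pb: "p \<in> ball \<eta> d" using \<eta>s d by (simp add: p_def dist_norm norm_mult)
    have sub: "ball \<eta> d \<subseteq> connected_component_set (- S) y"
      by (rule connected_component_maximal[OF y(1) connected_ball d(2)])
    have "connected_component_set (- S) p = connected_component_set (- S) y"
      using connected_component_eq sub pb by blast
    moreover have "bounded (connected_component_set (- S) y)" using y(2) by (simp add: \<Omega>_def inside_def)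
    moreover have "p \<notin> S" using pb d by auto
    ultimately have "p \<in> \<Omega>" by (simp add: \<Omega>_def inside_def)
    then have "norm p < 1" using \<Omega>b by auto
    then show False using np d by simp
  qed
  have dis2: "ball \<eta> d \<inter> closure \<Omega> = {}"
    using dis open_Int_closure_eq_empty[OF open_ball] by blast
  have \<zeta>0\<beta>: "\<zeta>0 \<notin> path_image \<beta>"
  proof
    assume "\<zeta>0 \<in> path_image \<beta>"
    then have "\<zeta>0 \<in> E \<union> {\<zeta>1, \<zeta>2}" using \<beta>E by auto
    then show False using \<zeta>0s Eb \<alpha>(6,7) by auto
  qed
  obtain d0' where d0': "d0' > 0" "ball \<zeta>0 d0' \<subseteq> - path_image \<beta>"
    using open_contains_ball[of "- path_image \<beta>"] closed\<beta> \<zeta>0\<beta> by (auto simp: open_Compl)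
  define d0 where "d0 = min d0' 1"
  have d0: "d0 > 0" "d0 \<le> 1" using d0' by (auto simp: d0_def)
  have "\<zeta>0 \<in> closure \<Omega>" using fr S \<alpha>(5) frontier_def by auto
  then obtain y where y: "y \<in> \<Omega>" "dist y \<zeta>0 < d0" using d0 closure_approachable by blast
  define V where "V = ball \<zeta>0 d0 \<inter> ball 0 1"
  have yV: "y \<in> V" using y \<Omega>b by (auto simp: V_def dist_commute)
  have VS: "V \<subseteq> - S"
  proof
    fix v assume v: "v \<in> V"
    have "v \<notin> path_image \<alpha>" using v \<alpha>(2) by (auto simp: V_def)
    moreover have "v \<notin> path_image \<beta>" using v d0' by (auto simp: V_def d0_def)
    ultimately show "v \<in> - S" using S by auto
  qed
  have VO: "V \<subseteq> \<Omega>"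
  proof
    fix v assume v: "v \<in> V"
    have sub: "V \<subseteq> connected_component_set (- S) y"
      by (rule connected_component_maximal[OF yV _ VS]) (simp add: V_def convex_connected convex_Int)
    have "connected_component_set (- S) v = connected_component_set (- S) y"
      using connected_component_eq sub v by blast
    moreover have "bounded (connected_component_set (- S) y)" using y(1) by (simp add: \<Omega>_def inside_def)
    moreover have "v \<notin> S" using v VS by auto
    ultimately show "v \<in> \<Omega>" by (simp add: \<Omega>_def inside_def)
  qed
  show ?thesis
  proof (intro exI conjI)
    show "open \<Omega>" "\<Omega> \<subseteq> ball 0 1" by (fact o\<Omega>, fact \<Omega>b)
    show "frontier \<Omega> \<inter> ball 0 1 \<subseteq> \<gamma>1 ` {0..<1} \<union> \<gamma>2 ` {0..<1} \<union> closed_segment (\<gamma>1 0) (\<gamma>2 0)"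
      using fr S \<alpha>(2) \<beta>E \<zeta>1 \<zeta>2 unfolding E_def by auto
    show "\<eta> \<in> sphere 0 1" "d > 0" "ball \<eta> d \<inter> closure \<Omega> = {}" by (fact \<eta>s, fact d(1), fact dis2)
    show "\<zeta>0 \<in> sphere 0 1" "d0 > 0" "d0 \<le> 1" by (fact \<zeta>0s, fact d0(1), fact d0(2))
    show "ball \<zeta>0 d0 \<inter> ball 0 1 \<subseteq> \<Omega>" using VO by (simp add: V_def)
  qed
qed


lemma rot_zero:
  fixes G :: "complex \<Rightarrow> complex"
  assumes holG: "G holomorphic_on ball 0 1" and G1: "\<And>z. z \<in> ball 0 1 \<Longrightarrow> norm (G z) \<le> 1"
    and \<zeta>0: "\<zeta>0 \<in> sphere 0 1" and \<delta>: "\<delta> > 0"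
    and small: "\<And>\<epsilon>. \<epsilon> > 0 \<Longrightarrow> \<exists>s. 0 < s \<and> s < 1 \<and>
        (\<forall>\<zeta>\<in>sphere 0 1 \<inter> cball \<zeta>0 \<delta>. norm (G (complex_of_real s * \<zeta>)) \<le> \<epsilon>)"
  shows "G 0 = 0"
proof (rule ccontr)
  assume G0: "G 0 \<noteq> 0"
  define N :: nat where "N = nat (ceiling (2 * pi / \<delta>)) + 1"
  have N0: "N > 0" by (simp add: N_def)
  have Nd: "2 * pi / N \<le> \<delta>"
  proof -
    have "2 * pi / \<delta> \<le> real N" unfolding N_def by linarith
    then have "2 * pi \<le> real N * \<delta>" using \<delta> by (simp add: field_simps)
    then show ?thesis using N0 by (simp add: field_simps)
  qed
  define R where "R j = exp (\<i> * complex_of_real (- (2 * pi * real j / real N)))" for j :: nat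
  have nR: "norm (R j) = 1" for j by (simp add: R_def)
  define H where "H z = (\<Prod>j<N. G (R j * z))" for z
  have holH: "H holomorphic_on ball 0 1"
  proof -
    have "(\<lambda>z. G (R j * z)) holomorphic_on ball 0 1" for j
    proof -
      have "(\<lambda>z. R j * z) ` ball 0 1 \<subseteq> ball 0 1" using nR by (auto simp: norm_mult)
      then show ?thesis
        by (intro holomorphic_on_compose_gen[OF _ holG, unfolded o_def]) (auto intro: holomorphic_intros)
    qed
    then show ?thesis unfolding H_def by (intro holomorphic_on_prod) auto
  qed
  define \<epsilon> where "\<epsilon> = norm (G 0) ^ N / 2"
  have \<epsilon>: "\<epsilon> > 0" using G0 by (simp add: \<epsilon>_def)
  obtain s where s: "0 < s" "s < 1" "\<And>\<zeta>. \<zeta> \<in> sphere 0 1 \<inter> cball \<zeta>0 \<delta> \<Longrightarrow> norm (G (complex_of_real s * \<zeta>)) \<le> \<epsilon>"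
    using small[OF \<epsilon>] by blast
  have bnd: "norm (H z) \<le> \<epsilon>" if z: "z \<in> frontier (ball 0 s)" for z
  proof -
    have nz: "norm z = s" using z s by (simp add: frontier_ball)
    define \<zeta> where "\<zeta> = z / complex_of_real s"
    have z\<zeta>: "z = complex_of_real s * \<zeta>" using s by (simp add: \<zeta>_def)
    have n\<zeta>: "norm \<zeta> = 1" using nz s by (simp add: \<zeta>_def norm_divide)
    define \<theta> where "\<theta> = Arg2pi (\<zeta> / \<zeta>0)"
    have n\<zeta>0: "norm \<zeta>0 = 1" using \<zeta>0 by simp
    have e\<theta>: "exp (\<i> * complex_of_real \<theta>) = \<zeta> / \<zeta>0"
      using complex_norm_eq_1_exp[of "\<zeta> / \<zeta>0"] n\<zeta> n\<zeta>0 by (simp add: \<theta>_def norm_divide)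
    have \<theta>: "0 \<le> \<theta>" "\<theta> < 2 * pi" using Arg2pi_ge_0 Arg2pi_lt_2pi \<theta>_def by auto
    define k where "k = nat (floor (\<theta> * N / (2 * pi)))"
    have k1: "real k \<le> \<theta> * N / (2 * pi)" "\<theta> * N / (2 * pi) < real k + 1"
      using \<theta> unfolding k_def by (auto simp: divide_nonneg_nonneg)
    have kN: "k < N"
    proof -
      have "\<theta> * N / (2 * pi) < N" using \<theta> N0 by (simp add: field_simps)
      then show ?thesis using k1 by linarith
    qed
    define x where "x = \<theta> - 2 * pi * real k / real N"
    have x: "0 \<le> x" "x < 2 * pi / N"
    proof -
      have "2 * pi * real k / real N \<le> \<theta>" using k1(1) N0 by (simp add: field_simps)
      then show "0 \<le> x" by (simp add: x_def)
      have "\<theta> < 2 * pi * (real k + 1) / real N" using k1(2) N0 by (simp add: field_simps)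
      moreover have "2 * pi * (real k + 1) / real N = 2 * pi / N + 2 * pi * real k / real N"
        by (simp add: add_divide_distrib algebra_simps)
      ultimately show "x < 2 * pi / N" by (simp add: x_def)
    qed
    have Rk: "R k * \<zeta> = \<zeta>0 * exp (\<i> * complex_of_real x)"
    proof -
      have "\<zeta> = \<zeta>0 * exp (\<i> * complex_of_real \<theta>)" using e\<theta> n\<zeta>0 by auto
      moreover have eq: "\<i> * complex_of_real x = \<i> * complex_of_real (- (2 * pi * real k / real N)) + \<i> * complex_of_real \<theta>"
        by (simp add: x_def algebra_simps)
      have "exp (\<i> * complex_of_real x) = R k * exp (\<i> * complex_of_real \<theta>)"
        unfolding R_def by (simp only: eq exp_add)
      ultimately show ?thesis by (simp add: algebra_simps)
    qed
    have "norm (R k * \<zeta> - \<zeta>0) = norm (exp (\<i> * complex_of_real x) - 1)"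
    proof -
      have "\<zeta>0 * exp (\<i> * complex_of_real x) - \<zeta>0 = \<zeta>0 * (exp (\<i> * complex_of_real x) - 1)"
        by (simp add: algebra_simps)
      then show ?thesis unfolding Rk using n\<zeta>0 by (simp only: norm_mult mult_1)
    qed
    also have "\<dots> = 2 * \<bar>sin (x / 2)\<bar>" by (rule dist_exp_i_1)
    also have "\<dots> \<le> 2 * \<bar>x / 2\<bar>" using abs_sin_x_le_abs_x[of "x / 2"] by linarith
    also have "\<dots> \<le> \<delta>" using x Nd by simp
    finally have "R k * \<zeta> \<in> sphere 0 1 \<inter> cball \<zeta>0 \<delta>" using nR n\<zeta> by (simp add: norm_mult dist_norm norm_minus_commute)
    then have Gk: "norm (G (R k * z)) \<le> \<epsilon>" using s(3)[of "R k * \<zeta>"] z\<zeta> by (simp add: algebra_simps)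
    have Rin: "R j * z \<in> ball 0 1" for j using nR nz s by (simp add: norm_mult)
    have "norm (H z) = (\<Prod>j<N. norm (G (R j * z)))" by (simp add: H_def prod_norm)
    also have "\<dots> = norm (G (R k * z)) * (\<Prod>j\<in>{..<N} - {k}. norm (G (R j * z)))"
      using kN by (subst prod.remove[of _ k]) auto
    also have "\<dots> \<le> norm (G (R k * z)) * 1"
      by (intro mult_left_mono prod_le_1) (auto intro: G1 Rin)
    also have "\<dots> \<le> \<epsilon>" using Gk by simp
    finally show ?thesis .
  qed
  have "norm (H 0) \<le> \<epsilon>"
  proof (rule maximum_modulus_frontier[of H "ball 0 s"])
    show "H holomorphic_on interior (ball 0 s)" using holH s by (auto intro: holomorphic_on_subset)
    show "continuous_on (closure (ball 0 s)) H" using s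
      by (intro holomorphic_on_imp_continuous_on holomorphic_on_subset[OF holH]) auto
  qed (use s bnd in auto)
  moreover have "H 0 = G 0 ^ N" by (simp add: H_def)
  ultimately have "norm (G 0) ^ N \<le> norm (G 0) ^ N / 2" by (simp add: \<epsilon>_def norm_power)
  then show False using G0 by simp
qed


theorem proposition3p12:
  fixes r :: "nat \<Rightarrow> real"
    and \<gamma>1 \<gamma>2 :: "real \<Rightarrow> complex"
    and \<zeta>1 \<zeta>2 :: complex
    and h :: "complex \<Rightarrow> real"
  assumes r_mono: "incseq r"
    and r_range: "\<And>n. r n \<in> {0..<1}"
    and r_lim: "r \<longlonglongrightarrow> 1"
    and \<gamma>1_cont: "continuous_on {0..<1} \<gamma>1"
    and \<gamma>2_cont: "continuous_on {0..<1} \<gamma>2"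
    and \<gamma>1_in: "\<gamma>1 ` {0..<1} \<subseteq> ball 0 1"
    and \<gamma>2_in: "\<gamma>2 ` {0..<1} \<subseteq> ball 0 1"
    and disj: "\<gamma>1 ` {0..<1} \<inter> \<gamma>2 ` {0..<1} = {}"
    and \<zeta>1: "\<zeta>1 \<in> sphere 0 1" and \<zeta>2: "\<zeta>2 \<in> sphere 0 1" and \<zeta>_ne: "\<zeta>1 \<noteq> \<zeta>2"
    and \<gamma>1_lim: "(\<gamma>1 \<longlongrightarrow> \<zeta>1) (at_left 1)"
    and \<gamma>2_lim: "(\<gamma>2 \<longlongrightarrow> \<zeta>2) (at_left 1)"
    and h_harm: "harmonic_on h (ball 0 1)"
    and h_pos: "\<And>z. z \<in> ball 0 1 \<Longrightarrow> h z > 0"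
  shows "\<not> (\<exists>f\<in>U_A r. \<forall>z \<in> \<gamma>1 ` {0..<1} \<union> \<gamma>2 ` {0..<1}. norm (f z) \<le> exp (h z))"
proof
  assume "\<exists>f\<in>U_A r. \<forall>z \<in> \<gamma>1 ` {0..<1} \<union> \<gamma>2 ` {0..<1}. norm (f z) \<le> exp (h z)"
  then obtain f where fU: "f \<in> U_A r"
    and fb: "\<And>z. z \<in> \<gamma>1 ` {0..<1} \<union> \<gamma>2 ` {0..<1} \<Longrightarrow> norm (f z) \<le> exp (h z)" by blast
  have holf: "f holomorphic_on ball 0 1" using fU by (simp add: U_A_def)
  have univ: "\<And>K \<phi>. compact K \<Longrightarrow> K \<subseteq> sphere 0 1 \<Longrightarrow> K \<noteq> sphere 0 1 \<Longrightarrow> continuous_on K \<phi> \<Longrightarrow>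
        (\<exists>n::nat \<Rightarrow> nat. strict_mono n \<and>
           (\<forall>\<epsilon>>0. \<forall>\<^sub>F k in sequentially. \<forall>\<zeta>\<in>K.
               norm (f (complex_of_real (r (n k)) * \<zeta>) - \<phi> \<zeta>) < \<epsilon>))"
    using fU unfolding U_A_def by blast
  have rlt: "r n < 1" "0 \<le> r n" for n using r_range[of n] by auto
  obtain g where holg: "g holomorphic_on ball 0 1" and reg: "\<And>z. z \<in> ball 0 1 \<Longrightarrow> Re (g z) = h z"
    using harmonic_conj[OF h_harm] by blast
  define G where "G z = exp (- g z)" for z
  have holG: "G holomorphic_on ball 0 1" unfolding G_def using holg by (intro holomorphic_intros)
  have nG: "norm (G z) = exp (- h z)" if "z \<in> ball 0 1" for z
    using reg[OF that] by (simp add: G_def norm_exp_eq_Re)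
  have G1: "norm (G z) \<le> 1" if "z \<in> ball 0 1" for z
    using nG[OF that] h_pos[OF that] by simp
  have G0: "G 0 \<noteq> 0" by (simp add: G_def)
  define F where "F z = f z * G z" for z
  have holF: "F holomorphic_on ball 0 1" unfolding F_def using holf holG by (intro holomorphic_intros)
  have contF: "continuous_on (ball 0 1) F" using holF by (rule holomorphic_on_imp_continuous_on)
  obtain \<Omega> \<eta> d \<zeta>0 d0 where \<Omega>: "open \<Omega>" "\<Omega> \<subseteq> ball 0 1"
     "frontier \<Omega> \<inter> ball 0 1 \<subseteq> \<gamma>1 ` {0..<1} \<union> \<gamma>2 ` {0..<1} \<union> closed_segment (\<gamma>1 0) (\<gamma>2 0)"
     and \<eta>: "\<eta> \<in> sphere 0 1" "d > 0" "ball \<eta> d \<inter> closure \<Omega> = {}"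
     and \<zeta>0: "\<zeta>0 \<in> sphere 0 1" "d0 > 0" "d0 \<le> 1" "ball \<zeta>0 d0 \<inter> ball 0 1 \<subseteq> \<Omega>"
    using region[OF \<gamma>1_cont \<gamma>2_cont \<gamma>1_in \<gamma>2_in \<zeta>1 \<zeta>2 \<zeta>_ne \<gamma>1_lim \<gamma>2_lim] by blast
  have g10: "\<gamma>1 0 \<in> ball 0 1" and g20: "\<gamma>2 0 \<in> ball 0 1"
    using \<gamma>1_in \<gamma>2_in image_subset_iff[of _ "{0..<1}"] by (force, force)
  have segb: "closed_segment (\<gamma>1 0) (\<gamma>2 0) \<subseteq> ball 0 1"
    using closed_segment_subset[OF g10 g20 convex_ball] .
  obtain M where M: "\<And>z. z \<in> closed_segment (\<gamma>1 0) (\<gamma>2 0) \<Longrightarrow> norm (F z) \<le> M"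
  proof -
    have "compact (F ` closed_segment (\<gamma>1 0) (\<gamma>2 0))"
      by (rule compact_continuous_image[OF continuous_on_subset[OF contF segb] compact_segment])
    then obtain B where "\<forall>x\<in>F ` closed_segment (\<gamma>1 0) (\<gamma>2 0). norm x \<le> B"
      using compact_imp_bounded bounded_iff by metis
    then show ?thesis using that by blast
  qed
  define M' where "M' = max 1 M"
  have M'1: "M' \<ge> 1" by (simp add: M'_def)
  have FE: "norm (F z) \<le> M'" if z: "z \<in> frontier \<Omega> \<inter> ball 0 1" for z
  proof -
    have zb: "z \<in> ball 0 1" using z by auto
    consider "z \<in> \<gamma>1 ` {0..<1} \<union> \<gamma>2 ` {0..<1}" | "z \<in> closed_segment (\<gamma>1 0) (\<gamma>2 0)"
      using z \<Omega>(3) by blast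
    then show ?thesis
    proof cases
      case 1
      have "norm (F z) = norm (f z) * exp (- h z)" by (simp add: F_def norm_mult nG[OF zb])
      also have "\<dots> \<le> exp (h z) * exp (- h z)" by (intro mult_right_mono fb[OF 1]) auto
      also have "\<dots> = 1" by (simp add: exp_minus)
      finally show ?thesis using M'1 by simp
    next
      case 2
      then show ?thesis using M[OF 2] by (simp add: M'_def)
    qed
  qed
  have rsub: "(\<lambda>k. r (n k)) \<longlonglongrightarrow> 1" if "strict_mono n" for n
    using LIMSEQ_subseq_LIMSEQ[OF r_lim that] by (simp add: o_def)
  define K1 where "K1 = sphere (0::complex) 1 - ball \<eta> (d/2)"
  have K1: "compact K1" "K1 \<subseteq> sphere 0 1" "K1 \<noteq> sphere 0 1"
  proof -
    show "compact K1" unfolding K1_def by (intro compact_diff) auto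
    show "K1 \<subseteq> sphere 0 1" by (auto simp: K1_def)
    have "\<eta> \<notin> K1" using \<eta>(2) by (simp add: K1_def)
    then show "K1 \<noteq> sphere 0 1" using \<eta>(1) by blast
  qed
  obtain n1 where n1: "strict_mono n1" "\<And>\<epsilon>. \<epsilon> > 0 \<Longrightarrow> \<forall>\<^sub>F k in sequentially. \<forall>\<zeta>\<in>K1.
               norm (f (complex_of_real (r (n1 k)) * \<zeta>) - 0) < \<epsilon>"
    using univ[OF K1, of "\<lambda>_. 0"] by auto
  have Fbd: "norm (F w) \<le> M'" if w: "w \<in> \<Omega>" for w
  proof -
    have wb: "norm w < 1" using w \<Omega>(2) by auto
    have "\<forall>\<^sub>F k in sequentially. max (norm w) (1 - d/2) < r (n1 k)"
    proof -
      have "max (norm w) (1 - d/2) < 1" using wb \<eta>(2) by simp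
      then show ?thesis using order_tendstoD(1)[OF rsub[OF n1(1)]] by blast
    qed
    moreover have "\<forall>\<^sub>F k in sequentially. \<forall>\<zeta>\<in>K1. norm (f (complex_of_real (r (n1 k)) * \<zeta>) - 0) < 1"
      using n1(2)[of 1] by simp
    ultimately have "\<forall>\<^sub>F k in sequentially. max (norm w) (1 - d/2) < r (n1 k) \<and>
        (\<forall>\<zeta>\<in>K1. norm (f (complex_of_real (r (n1 k)) * \<zeta>) - 0) < 1)"
      by (rule eventually_conj)
    then obtain k where k: "max (norm w) (1 - d/2) < r (n1 k)"
        "\<And>\<zeta>. \<zeta> \<in> K1 \<Longrightarrow> norm (f (complex_of_real (r (n1 k)) * \<zeta>)) < 1"
      unfolding eventually_sequentially by auto
    define s where "s = r (n1 k)"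
    have s: "norm w < s" "1 - d/2 < s" "s < 1" "0 < s"
      using k(1) rlt[of "n1 k"] norm_ge_zero[of w] unfolding s_def by linarith+
    define W where "W = \<Omega> \<inter> ball 0 s"
    have oW: "open W" using \<Omega>(1) by (simp add: W_def open_Int)
    have clW: "closure W \<subseteq> cball 0 s"
      using closure_mono[of W "ball 0 s"] closure_ball[of s 0] s by (auto simp: W_def)
    have cb1: "cball 0 s \<subseteq> ball (0::complex) 1" using s by auto
    show ?thesis
    proof (rule maximum_modulus_frontier[of F W])
      show "F holomorphic_on interior W"
      proof -
        have "interior W \<subseteq> ball 0 1" using oW cb1 by (auto simp: interior_open W_def)
        then show ?thesis using holF holomorphic_on_subset by blast
      qed
      show "continuous_on (closure W) F"
        using contF clW cb1 by (meson continuous_on_subset order_trans)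
      show "bounded W" by (simp add: W_def bounded_Int)
      show "w \<in> W" using w s by (simp add: W_def)
      fix z assume z: "z \<in> frontier W"
      have zc: "z \<in> closure W" "z \<notin> W" using z oW by (auto simp: frontier_def interior_open)
      have zO: "z \<in> closure \<Omega>" using zc(1) closure_mono[of W \<Omega>] by (auto simp: W_def)
      have zs: "norm z \<le> s" using zc(1) clW by auto
      show "norm (F z) \<le> M'"
      proof (cases "norm z < s")
        case True
        then have "z \<notin> \<Omega>" using zc(2) by (simp add: W_def)
        then have "z \<in> frontier \<Omega> \<inter> ball 0 1" using zO True s \<Omega>(1)
          by (auto simp: frontier_def interior_open)
        then show ?thesis by (rule FE)
      next
        case False
        then have nz: "norm z = s" using zs by simp
        define \<zeta> where "\<zeta> = z / complex_of_real s"
        have z\<zeta>: "z = complex_of_real s * \<zeta>" using s by (simp add: \<zeta>_def)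
        have n\<zeta>: "norm \<zeta> = 1" using nz s by (simp add: \<zeta>_def norm_divide)
        have "\<zeta> \<in> K1"
        proof (rule ccontr)
          assume "\<zeta> \<notin> K1"
          then have "dist \<eta> \<zeta> < d/2" using n\<zeta> by (simp add: K1_def)
          moreover have "dist \<zeta> z = 1 - s"
          proof -
            have "\<zeta> - z = complex_of_real (1 - s) * \<zeta>" by (simp add: z\<zeta> algebra_simps)
            then have "dist \<zeta> z = norm (complex_of_real (1 - s)) * norm \<zeta>" by (simp only: dist_norm norm_mult)
            then show ?thesis using n\<zeta> s by (simp only: norm_of_real) simp
          qed
          ultimately have "dist \<eta> z < d" using s dist_triangle[of \<eta> z \<zeta>] by linarith
          then show False using zO \<eta>(3) by auto
        qed
        then have fz: "norm (f z) < 1" using k(2) z\<zeta> by (simp add: s_def)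
        have zb: "z \<in> ball 0 1" using nz s by simp
        have "norm (F z) = norm (f z) * norm (G z)" by (simp add: F_def norm_mult)
        also have "\<dots> \<le> 1 * 1" using fz G1[OF zb] by (intro mult_mono) auto
        finally show ?thesis using M'1 by simp
      qed
    qed
  qed
  define K2 where "K2 = sphere (0::complex) 1 \<inter> cball \<zeta>0 (d0/2)"
  have small: "\<exists>s. 0 < s \<and> s < 1 \<and> (\<forall>\<zeta>\<in>K2. norm (G (complex_of_real s * \<zeta>)) \<le> \<epsilon>)"
    if \<epsilon>: "\<epsilon> > 0" for \<epsilon>
  proof -
    have K2: "compact K2" "K2 \<subseteq> sphere 0 1" "K2 \<noteq> sphere 0 1"
    proof -
      show "compact K2" unfolding K2_def by (intro compact_Int_closed) auto
      show "K2 \<subseteq> sphere 0 1" by (auto simp: K2_def)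
      have "dist \<zeta>0 (- \<zeta>0) = 2" using \<zeta>0(1) by (simp add: dist_norm)
      then have "- \<zeta>0 \<notin> K2" using \<zeta>0(3) by (auto simp: K2_def)
      moreover have "- \<zeta>0 \<in> sphere 0 1" using \<zeta>0(1) by simp
      ultimately show "K2 \<noteq> sphere 0 1" by blast
    qed
    define C where "C = M' / \<epsilon> + 2"
    obtain n2 where n2: "strict_mono n2" "\<And>e. e > 0 \<Longrightarrow> \<forall>\<^sub>F k in sequentially. \<forall>\<zeta>\<in>K2.
               norm (f (complex_of_real (r (n2 k)) * \<zeta>) - complex_of_real C) < e"
      using univ[OF K2, of "\<lambda>_. complex_of_real C"] by auto
    have "\<forall>\<^sub>F k in sequentially. 1 - d0/2 < r (n2 k)"
    proof -
      have "1 - d0/2 < 1" using \<zeta>0(2) by simp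
      then show ?thesis using order_tendstoD(1)[OF rsub[OF n2(1)]] by blast
    qed
    moreover have "\<forall>\<^sub>F k in sequentially. \<forall>\<zeta>\<in>K2. norm (f (complex_of_real (r (n2 k)) * \<zeta>) - complex_of_real C) < 1"
      using n2(2)[of 1] by simp
    ultimately have "\<forall>\<^sub>F k in sequentially. 1 - d0/2 < r (n2 k) \<and>
        (\<forall>\<zeta>\<in>K2. norm (f (complex_of_real (r (n2 k)) * \<zeta>) - complex_of_real C) < 1)"
      by (rule eventually_conj)
    then obtain k where k: "1 - d0/2 < r (n2 k)"
        "\<And>\<zeta>. \<zeta> \<in> K2 \<Longrightarrow> norm (f (complex_of_real (r (n2 k)) * \<zeta>) - complex_of_real C) < 1"
      unfolding eventually_sequentially by auto
    define s where "s = r (n2 k)"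
    have s: "1 - d0/2 < s" "s < 1" "0 < s"
      using k(1) rlt[of "n2 k"] \<zeta>0(3) unfolding s_def by linarith+
    show ?thesis
    proof (intro exI conjI ballI)
      show "0 < s" "s < 1" using s by auto
      fix \<zeta> assume \<zeta>: "\<zeta> \<in> K2"
      define z where "z = complex_of_real s * \<zeta>"
      have n\<zeta>: "norm \<zeta> = 1" using \<zeta> by (simp add: K2_def)
      have nz: "norm z = s" using n\<zeta> s by (simp add: z_def norm_mult)
      have "dist \<zeta> z = 1 - s"
      proof -
        have "\<zeta> - z = complex_of_real (1 - s) * \<zeta>" by (simp add: z_def algebra_simps)
        then have "dist \<zeta> z = norm (complex_of_real (1 - s)) * norm \<zeta>" by (simp only: dist_norm norm_mult)
        then show ?thesis using n\<zeta> s by (simp only: norm_of_real) simp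
      qed
      moreover have "dist \<zeta>0 \<zeta> \<le> d0/2" using \<zeta> by (simp add: K2_def)
      ultimately have "dist \<zeta>0 z < d0" using s dist_triangle[of \<zeta>0 z \<zeta>] by linarith
      then have zO: "z \<in> \<Omega>" using \<zeta>0(4) nz s by auto
      have zb: "z \<in> ball 0 1" using nz s by simp
      have FM: "norm (f z) * norm (G z) \<le> M'" using Fbd[OF zO] by (simp add: F_def norm_mult)
      have "norm (f z - complex_of_real C) < 1" using k(2)[OF \<zeta>] by (simp add: z_def s_def)
      moreover have "C > 0" using \<epsilon> M'1 by (simp add: C_def add_pos_nonneg)
      then have nC: "norm (complex_of_real C) = C" by simp
      ultimately have "C - 1 < norm (f z)"
        using norm_triangle_ineq2[of "complex_of_real C" "f z"] norm_minus_commute[of "complex_of_real C" "f z"]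
        by linarith
      then have fz: "M' / \<epsilon> \<le> norm (f z)" by (simp add: C_def)
      have "M' / \<epsilon> * norm (G z) \<le> M'"
        using FM fz by (meson mult_right_mono norm_ge_zero order_trans)
      then have "M' * norm (G z) \<le> M' * \<epsilon>" using \<epsilon> by (simp add: field_simps)
      then show "norm (G (complex_of_real s * \<zeta>)) \<le> \<epsilon>" using M'1 by (simp add: z_def)
    qed
  qed
  have "G 0 = 0"
    by (rule rot_zero[OF holG G1 \<zeta>0(1), of "d0/2"]) (use \<zeta>0(2) small in \<open>auto simp: K2_def\<close>)
  then show False using G0 by simp
qed

end
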